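(* Let $\mathcal{G}$ be a finite connected undirected simple graph with vertices $1,\dots,N$, let $p$ be a prime and $0\le\iota\le\kappa$ integers. If $h\in\mathcal{H}(\mathcal{G},p^\kappa)$ satisfies $p^\iota h(i)\equiv0\pmod{p^\kappa}$ for all $i$, then there exists $h'\in\mathcal{H}(\mathcal{G},p^\iota)$ with $h(i)\equiv p^{\kappa-\iota}h'(i)\pmod{p^\kappa}$ for all $i$.
   Context: The Laplacian $\nabla^2$ is the $N\times N$ integer matrix with $\nabla^2_{ii}=d_i$ (degree of $i$), $\nabla^2_{ij}=-1$ if $i,j$ adjacent, $0$ otherwise. $\mathbf{Z}_M=\{0,\dots,M-1\}$. $\mathcal{H}(\mathcal{G},M)$ denotes the set of functions $h:\{1,\dots,N\}\to\mathbf{Z}_M$ with $(\nabla^2h)(i)\equiv0\pmod M$ for all $i$. *)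

theory Defs
  imports Main "HOL-Number_Theory.Cong"
begin

definition simple_graph :: "nat \<Rightarrow> (nat \<Rightarrow> nat \<Rightarrow> bool) \<Rightarrow> bool" where
  "simple_graph N E \<longleftrightarrow>
     (\<forall>i j. E i j \<longrightarrow> i \<in> {1..N} \<and> j \<in> {1..N}) \<and>
     (\<forall>i j. E i j \<longrightarrow> E j i) \<and> (\<forall>i. \<not> E i i)"

definition connected_graph :: "nat \<Rightarrow> (nat \<Rightarrow> nat \<Rightarrow> bool) \<Rightarrow> bool" where
  "connected_graph N E \<longleftrightarrow> N \<ge> 1 \<and> (\<forall>i\<in>{1..N}. \<forall>j\<in>{1..N}. E\<^sup>*\<^sup>* i j)"

definition degree :: "nat \<Rightarrow> (nat \<Rightarrow> nat \<Rightarrow> bool) \<Rightarrow> nat \<Rightarrow> nat" where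
  "degree N E i = card {j \<in> {1..N}. E i j}"

definition laplacian :: "nat \<Rightarrow> (nat \<Rightarrow> nat \<Rightarrow> bool) \<Rightarrow> (nat \<Rightarrow> int) \<Rightarrow> nat \<Rightarrow> int" where
  "laplacian N E h i = (\<Sum>j\<in>{1..N}.
      (if j = i then int (degree N E i) else if E i j then -1 else 0) * h j)"

text \<open>H(G,M): functions {1..N} \<rightarrow> Z_M (represented as int-valued, values in {0..M-1},
  zero outside 1..N) with Laplacian vanishing mod M.\<close>
definition harmonic_mod :: "nat \<Rightarrow> (nat \<Rightarrow> nat \<Rightarrow> bool) \<Rightarrow> int \<Rightarrow> (nat \<Rightarrow> int) set" where
  "harmonic_mod N E M = {h. (\<forall>i\<in>{1..N}. h i \<in> {0..M-1}) \<and> (\<forall>i. i \<notin> {1..N} \<longrightarrow> h i = 0) \<and>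
      (\<forall>i\<in>{1..N}. [laplacian N E h i = 0] (mod M))}"

end

theory Submission
  imports Defs
begin

theorem lemma2:
  fixes N :: nat and E :: "nat \<Rightarrow> nat \<Rightarrow> bool" and p :: int and \<iota> \<kappa> :: nat
    and h :: "nat \<Rightarrow> int"
  assumes "simple_graph N E" and "connected_graph N E"
    and "prime p" and "\<iota> \<le> \<kappa>"
    and "h \<in> harmonic_mod N E (p ^ \<kappa>)"
    and "\<forall>i\<in>{1..N}. [p ^ \<iota> * h i = 0] (mod p ^ \<kappa>)"
  shows "\<exists>h' \<in> harmonic_mod N E (p ^ \<iota>).
           \<forall>i\<in>{1..N}. [h i = p ^ (\<kappa> - \<iota>) * h' i] (mod p ^ \<kappa>)"
proof -
  define q where "q = p ^ (\<kappa> - \<iota>)"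
  have p2: "p \<ge> 2" using assms(3) prime_ge_2_int by blast
  have qpos: "q > 0" unfolding q_def using p2 by simp
  have pipos: "p ^ \<iota> > 0" using p2 by simp
  have pk: "p ^ \<kappa> = p ^ \<iota> * q" unfolding q_def using assms(4)
    by (simp add: power_add[symmetric])
  define h' where "h' i = (if i \<in> {1..N} then h i div q else 0)" for i
  have hq: "h i = q * h' i" if "i \<in> {1..N}" for i
  proof -
    have "p ^ \<iota> * q dvd p ^ \<iota> * h i"
      using assms(6) that pk by (metis cong_0_iff)
    hence "q dvd h i" using pipos p2 by auto
    thus ?thesis unfolding h'_def using that by simp
  qed
  have hrange: "h i \<in> {0..p ^ \<kappa> - 1}" if "i \<in> {1..N}" for i
    using assms(5) that unfolding harmonic_mod_def by blast
  have lap: "[laplacian N E h i = 0] (mod p ^ \<kappa>)" if "i \<in> {1..N}" for i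
    using assms(5) that unfolding harmonic_mod_def by blast
  have lapeq: "laplacian N E h i = q * laplacian N E h' i" for i
    unfolding laplacian_def sum_distrib_left
    by (rule sum.cong) (auto simp: hq)
  show ?thesis
  proof (intro bexI ballI)
    fix i assume "i \<in> {1..N}"
    thus "[h i = p ^ (\<kappa> - \<iota>) * h' i] (mod p ^ \<kappa>)" using hq q_def by simp
  next
    show "h' \<in> harmonic_mod N E (p ^ \<iota>)"
      unfolding harmonic_mod_def
    proof (intro CollectI conjI ballI allI impI)
      fix i assume i: "i \<in> {1..N}"
      have a: "0 \<le> q * h' i" "q * h' i \<le> p ^ \<iota> * q - 1"
        using hrange[OF i] hq[OF i] pk by auto
      have "h' i \<ge> 0" using a(1) qpos by (simp add: zero_le_mult_iff)
      moreover have "q * h' i < q * p ^ \<iota>" using a(2) by (simp add: mult.commute)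
      hence "h' i < p ^ \<iota>" using qpos by simp
      ultimately show "h' i \<in> {0..p ^ \<iota> - 1}" by simp
    next
      fix i assume "i \<notin> {1..N}" thus "h' i = 0" unfolding h'_def by (simp only: if_False)
    next
      fix i assume i: "i \<in> {1..N}"
      have "p ^ \<iota> * q dvd q * laplacian N E h' i"
        using lap[OF i] lapeq pk by (metis cong_0_iff)
      hence "p ^ \<iota> dvd laplacian N E h' i" using qpos by (simp add: mult.commute)
      thus "[laplacian N E h' i = 0] (mod p ^ \<iota>)" by (simp add: cong_0_iff)
    qed
  qed
qed

end
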